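(* Let $Q\subset S^d$ be affinely independent, and let $S(C,R)$ be its touching sphere. Then $Q$ is nearly positively spanning if and only if $C\in\mathrm{conv}\,Q$. In this case $\mathrm{def}\,Q=\sqrt{1-R^2}$.
   Context: $S^d$ is the unit sphere in $\mathbb{R}^{d+1}$, $O$ is the origin, and $S(C,R)=\{x\in\mathbb{R}^{d+1}:\|x-C\|=R\}$. The touching sphere of an affinely independent set $Q$ is the unique sphere $S(C,R)$ with $C\in\mathrm{aff}\,Q$ and $Q\subset S(C,R)$. The set $Q$ is nearly positively spanning if it is affinely independent and the orthogonal projection $O'$ of $O$ onto $\mathrm{aff}\,Q$ lies in $\mathrm{conv}\,Q$. Its deficiency is then $\mathrm{def}\,Q=\|O'\|$. *)

theory Defs
  imports "HOL-Analysis.Analysis"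
begin

definition touching_sphere :: "'a::euclidean_space set \<Rightarrow> 'a \<Rightarrow> real \<Rightarrow> bool" where
  "touching_sphere Q C R \<longleftrightarrow> C \<in> affine hull Q \<and> Q \<subseteq> sphere C R"

definition proj_origin :: "'a::euclidean_space set \<Rightarrow> 'a" where
  "proj_origin Q = closest_point (affine hull Q) 0"

definition nearly_pos_spanning :: "'a::euclidean_space set \<Rightarrow> bool" where
  "nearly_pos_spanning Q \<longleftrightarrow> \<not> affine_dependent Q \<and> proj_origin Q \<in> convex hull Q"

definition deficiency :: "'a::euclidean_space set \<Rightarrow> real" where
  "deficiency Q = norm (proj_origin Q)"

end

theory Submission
  imports Defs
begin

theorem proposition2p5:
  fixes Q :: "'a::euclidean_space set" and C :: 'a and R :: real
  assumes "Q \<subseteq> sphere 0 1"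
    and "\<not> affine_dependent Q"
    and "touching_sphere Q C R"
  shows "(nearly_pos_spanning Q \<longleftrightarrow> C \<in> convex hull Q) \<and>
         (nearly_pos_spanning Q \<longrightarrow> deficiency Q = sqrt (1 - R\<^sup>2))"
proof -
  have CA: "C \<in> affine hull Q" and QS: "Q \<subseteq> sphere C R"
    using assms(3) unfolding touching_sphere_def by auto
  define k where "k = (1 + C \<bullet> C - R\<^sup>2) / 2"
  have nq: "\<And>q. q \<in> Q \<Longrightarrow> q \<bullet> q = 1 \<and> (q - C) \<bullet> (q - C) = R\<^sup>2"
  proof -
    fix q assume "q \<in> Q"
    then have "norm q = 1" "dist C q = R" using assms(1) QS by auto
    then show "q \<bullet> q = 1 \<and> (q - C) \<bullet> (q - C) = R\<^sup>2"
      by (metis dist_norm norm_minus_commute power2_norm_eq_inner power_one)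
  qed
  have "Q \<subseteq> {y. C \<bullet> y = k}"
  proof
    fix q assume "q \<in> Q"
    from nq[OF this] show "q \<in> {y. C \<bullet> y = k}"
      unfolding k_def by (simp add: inner_diff_left inner_diff_right inner_commute algebra_simps)
  qed
  then have AH: "affine hull Q \<subseteq> {y. C \<bullet> y = k}"
    by (rule hull_minimal) (rule affine_hyperplane)
  with CA have Ck: "C \<bullet> C = k" by auto
  have P: "proj_origin Q = C"
    unfolding proj_origin_def
  proof (rule closest_point_unique[symmetric])
    show "convex (affine hull Q)" by (simp add: affine_imp_convex)
    show "closed (affine hull Q)" by simp
    show "C \<in> affine hull Q" by fact
    show "\<forall>z\<in>affine hull Q. dist 0 C \<le> dist 0 z"
    proof
      fix z assume "z \<in> affine hull Q"
      with AH Ck have zc: "C \<bullet> z = C \<bullet> C" by auto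
      have "z \<bullet> z = (z - C) \<bullet> (z - C) + C \<bullet> C"
        using zc by (simp add: inner_diff_left inner_diff_right inner_commute algebra_simps)
      then have "C \<bullet> C \<le> z \<bullet> z" by simp
      then have "norm C \<le> norm z"
        by (simp add: norm_eq_sqrt_inner)
      then show "dist 0 C \<le> dist 0 z" by simp
    qed
  qed
  have "Q \<noteq> {}" using CA by auto
  then obtain q where "q \<in> Q" by auto
  from nq[OF this] Ck have "C \<bullet> q = C \<bullet> C" using AH \<open>q \<in> Q\<close> hull_subset by fastforce
  with nq[OF \<open>q \<in> Q\<close>] have "R\<^sup>2 = 1 - C \<bullet> C"
    by (simp add: inner_diff_left inner_diff_right inner_commute algebra_simps)
  then have "sqrt (1 - R\<^sup>2) = norm C" by (simp add: norm_eq_sqrt_inner)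
  then show ?thesis
    using P assms(2) unfolding nearly_pos_spanning_def deficiency_def by auto
qed

end
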